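(* Let $\beta=(\pi_\ell)_{\ell=1}^L$ be a chainable and non-redundant architecture. Then for any $1\le q\le s<t\le L$, the pair $(\pi_q*\cdots*\pi_s,\ \pi_{s+1}*\cdots*\pi_t)$ is chainable and non-redundant.
   Context: A pattern is a tuple $\pi=(a,b,c,d)$ of positive integers. Patterns $\pi=(a,b,c,d),\pi'=(a',b',c',d')$ are chainable if $ac/a'=b'd'/d$, this common value $r(\pi,\pi')$ is an integer, $a\mid a'$ and $d'\mid d$; then $\pi*\pi':=(a,bd/d',a'c'/a,d')$. A chainable pair $(\pi,\pi')$ is redundant if $r(\pi,\pi')\ge\min(b,c')$, and non-redundant otherwise. An architecture $\beta=(\pi_\ell)_{\ell=1}^L$, $\pi_\ell=(a_\ell,b_\ell,c_\ell,d_\ell)$, is a sequence of patterns with $a_\ell c_\ell d_\ell=a_{\ell+1}b_{\ell+1}d_{\ell+1}$; it is chainable if every consecutive pair is chainable, and a chainable architecture is redundant if some consecutive pair $(\pi_\ell,\pi_{\ell+1})$ is redundant. $\pi_q*\cdots*\pi_s$ is the iterated product. *)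

theory Defs
  imports Complex_Main
begin

type_synonym pattern = "nat \<times> nat \<times> nat \<times> nat"

definition pa :: "pattern \<Rightarrow> nat" where "pa p = fst p"
definition pb :: "pattern \<Rightarrow> nat" where "pb p = fst (snd p)"
definition pc :: "pattern \<Rightarrow> nat" where "pc p = fst (snd (snd p))"
definition pd :: "pattern \<Rightarrow> nat" where "pd p = snd (snd (snd p))"

definition is_pattern :: "pattern \<Rightarrow> bool" where
  "is_pattern p \<longleftrightarrow> pa p > 0 \<and> pb p > 0 \<and> pc p > 0 \<and> pd p > 0"

definition rval :: "pattern \<Rightarrow> pattern \<Rightarrow> rat" where
  "rval p p' = of_nat (pa p * pc p) / of_nat (pa p')"

definition chainable :: "pattern \<Rightarrow> pattern \<Rightarrow> bool" where
  "chainable p p' \<longleftrightarrow>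
     of_nat (pa p * pc p) / of_nat (pa p') = (of_nat (pb p' * pd p') / of_nat (pd p) :: rat)
     \<and> rval p p' \<in> \<int> \<and> pa p dvd pa p' \<and> pd p' dvd pd p"

definition pmult :: "pattern \<Rightarrow> pattern \<Rightarrow> pattern" (infixl "\<star>" 70) where
  "p \<star> p' = (pa p, pb p * pd p div pd p', pa p' * pc p' div pa p, pd p')"

definition redundant_pair :: "pattern \<Rightarrow> pattern \<Rightarrow> bool" where
  "redundant_pair p p' \<longleftrightarrow> chainable p p' \<and> rval p p' \<ge> of_nat (min (pb p) (pc p'))"

definition nonredundant_pair :: "pattern \<Rightarrow> pattern \<Rightarrow> bool" where
  "nonredundant_pair p p' \<longleftrightarrow> chainable p p' \<and> rval p p' < of_nat (min (pb p) (pc p'))"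

definition architecture :: "(nat \<Rightarrow> pattern) \<Rightarrow> nat \<Rightarrow> bool" where
  "architecture \<beta> L \<longleftrightarrow> (\<forall>l\<in>{1..L}. is_pattern (\<beta> l)) \<and>
     (\<forall>l. 1 \<le> l \<and> l < L \<longrightarrow>
        pa (\<beta> l) * pc (\<beta> l) * pd (\<beta> l) = pa (\<beta> (l+1)) * pb (\<beta> (l+1)) * pd (\<beta> (l+1)))"

definition chainable_arch :: "(nat \<Rightarrow> pattern) \<Rightarrow> nat \<Rightarrow> bool" where
  "chainable_arch \<beta> L \<longleftrightarrow> architecture \<beta> L \<and>
     (\<forall>l. 1 \<le> l \<and> l < L \<longrightarrow> chainable (\<beta> l) (\<beta> (l+1)))"

definition redundant_arch :: "(nat \<Rightarrow> pattern) \<Rightarrow> nat \<Rightarrow> bool" where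
  "redundant_arch \<beta> L \<longleftrightarrow> chainable_arch \<beta> L \<and>
     (\<exists>l. 1 \<le> l \<and> l < L \<and> redundant_pair (\<beta> l) (\<beta> (l+1)))"

fun iprod :: "(nat \<Rightarrow> pattern) \<Rightarrow> nat \<Rightarrow> nat \<Rightarrow> pattern" where
  "iprod \<beta> q s = (if s \<le> q then \<beta> q else iprod \<beta> q (s - 1) \<star> \<beta> s)"

end

theory Submission
  imports Defs
begin

lemma chain_nat:
  assumes "is_pattern p" "is_pattern p'" "chainable p p'"
  shows "\<exists>r. pa p * pc p = r * pa p' \<and> pb p' * pd p' = r * pd p \<and> rval p p' = of_nat r
          \<and> pa p dvd pa p' \<and> pd p' dvd pd p"
proof -
  have pos: "pa p' > 0" "pd p > 0" using assms(1,2) unfolding is_pattern_def by auto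
  from assms(3) have e: "of_nat (pa p * pc p) / of_nat (pa p') = (of_nat (pb p' * pd p') / of_nat (pd p) :: rat)"
    and z: "rval p p' \<in> \<int>" and d: "pa p dvd pa p'" "pd p' dvd pd p"
    unfolding chainable_def by auto
  from z obtain k :: int where k: "rval p p' = of_int k" by (auto elim: Ints_cases)
  have "rval p p' \<ge> 0" unfolding rval_def by simp
  hence "k \<ge> 0" using k by simp
  define r where "r = nat k"
  have rv: "rval p p' = of_nat r" using k \<open>k \<ge> 0\<close> r_def by simp
  have "(of_nat (pa p * pc p) :: rat) = of_nat r * of_nat (pa p')"
    using rv pos unfolding rval_def by (simp add: field_simps)
  hence 1: "pa p * pc p = r * pa p'" by (metis of_nat_eq_iff of_nat_mult)
  have "(of_nat (pb p' * pd p') :: rat) = of_nat r * of_nat (pd p)"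
    using rv pos e unfolding rval_def by (simp add: field_simps)
  hence 2: "pb p' * pd p' = r * pd p" by (metis of_nat_eq_iff of_nat_mult)
  show ?thesis using 1 2 rv d by blast
qed

lemma chain_intro:
  assumes "pa p' > 0" "pd p > 0" "pa p * pc p = r * pa p'" "pb p' * pd p' = r * pd p"
    "pa p dvd pa p'" "pd p' dvd pd p"
  shows "chainable p p' \<and> rval p p' = of_nat r"
proof -
  have rv: "rval p p' = of_nat r" unfolding rval_def using assms(1,3)
    by (simp add: field_simps flip: of_nat_mult)
  have "(of_nat (pb p' * pd p') :: rat) / of_nat (pd p) = of_nat r"
    using assms(2,4) by (simp add: field_simps flip: of_nat_mult)
  thus ?thesis using rv assms(5,6) unfolding chainable_def rval_def by auto
qed

lemma iprod_form:
  assumes "q \<le> s"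
    and H: "\<And>l. q \<le> l \<Longrightarrow> l < s \<Longrightarrow> pa (\<beta> l) dvd pa (\<beta> (l+1)) \<and> pd (\<beta> (l+1)) dvd pd (\<beta> l)"
    and P: "\<And>l. q \<le> l \<Longrightarrow> l \<le> s \<Longrightarrow> is_pattern (\<beta> l)"
  shows "iprod \<beta> q s = (pa (\<beta> q), pb (\<beta> q) * pd (\<beta> q) div pd (\<beta> s),
             pa (\<beta> s) * pc (\<beta> s) div pa (\<beta> q), pd (\<beta> s))
         \<and> pa (\<beta> q) dvd pa (\<beta> s) \<and> pd (\<beta> s) dvd pd (\<beta> q)"
  using assms
proof (induction s rule: dec_induct)
  case base
  have "iprod \<beta> q q = \<beta> q" by simp
  moreover have "is_pattern (\<beta> q)" using base by auto
  ultimately show ?case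
    by (cases "\<beta> q") (auto simp: pa_def pb_def pc_def pd_def is_pattern_def)
next
  case (step n)
  have IH: "iprod \<beta> q n = (pa (\<beta> q), pb (\<beta> q) * pd (\<beta> q) div pd (\<beta> n),
             pa (\<beta> n) * pc (\<beta> n) div pa (\<beta> q), pd (\<beta> n))"
     and d1: "pa (\<beta> q) dvd pa (\<beta> n)" and d2: "pd (\<beta> n) dvd pd (\<beta> q)"
    using step by auto
  have h: "pa (\<beta> n) dvd pa (\<beta> (n+1))" "pd (\<beta> (n+1)) dvd pd (\<beta> n)" using step by auto
  have "iprod \<beta> q (Suc n) = iprod \<beta> q n \<star> \<beta> (Suc n)" using step(1) by simp
  also have "\<dots> = (pa (\<beta> q), pb (\<beta> q) * pd (\<beta> q) div pd (\<beta> (Suc n)),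
             pa (\<beta> (Suc n)) * pc (\<beta> (Suc n)) div pa (\<beta> q), pd (\<beta> (Suc n)))"
    unfolding IH pmult_def using d2 by (simp add: pa_def pb_def pc_def pd_def)
  finally show ?case using d1 d2 h by (auto intro: dvd_trans)
qed

theorem lemma4p12:
  fixes \<beta> :: "nat \<Rightarrow> pattern" and L q s t :: nat
  assumes "chainable_arch \<beta> L"
    and "\<not> redundant_arch \<beta> L"
    and "1 \<le> q" and "q \<le> s" and "s < t" and "t \<le> L"
  shows "chainable (iprod \<beta> q s) (iprod \<beta> (s+1) t)
       \<and> nonredundant_pair (iprod \<beta> q s) (iprod \<beta> (s+1) t)"
proof -
  have pat: "\<And>l. 1 \<le> l \<Longrightarrow> l \<le> L \<Longrightarrow> is_pattern (\<beta> l)"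
    using assms(1) unfolding chainable_arch_def architecture_def by auto
  have ch: "\<And>l. 1 \<le> l \<Longrightarrow> l < L \<Longrightarrow> chainable (\<beta> l) (\<beta> (l+1))"
    using assms(1) unfolding chainable_arch_def by auto
  have nr: "\<And>l. 1 \<le> l \<Longrightarrow> l < L \<Longrightarrow> \<not> redundant_pair (\<beta> l) (\<beta> (l+1))"
    using assms(1,2) unfolding redundant_arch_def by auto
  have "\<forall>l. \<exists>r. 1 \<le> l \<and> l < L \<longrightarrow>
     pa (\<beta> l) * pc (\<beta> l) = r * pa (\<beta> (l+1)) \<and> pb (\<beta> (l+1)) * pd (\<beta> (l+1)) = r * pd (\<beta> l)
     \<and> pa (\<beta> l) dvd pa (\<beta> (l+1)) \<and> pd (\<beta> (l+1)) dvd pd (\<beta> l)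
     \<and> r < pb (\<beta> l) \<and> r < pc (\<beta> (l+1))"
  proof
    fix l
    show "\<exists>r. 1 \<le> l \<and> l < L \<longrightarrow>
     pa (\<beta> l) * pc (\<beta> l) = r * pa (\<beta> (l+1)) \<and> pb (\<beta> (l+1)) * pd (\<beta> (l+1)) = r * pd (\<beta> l)
     \<and> pa (\<beta> l) dvd pa (\<beta> (l+1)) \<and> pd (\<beta> (l+1)) dvd pd (\<beta> l)
     \<and> r < pb (\<beta> l) \<and> r < pc (\<beta> (l+1))"
    proof (cases "1 \<le> l \<and> l < L")
      case True
      then obtain r where r: "pa (\<beta> l) * pc (\<beta> l) = r * pa (\<beta> (l+1))"
        "pb (\<beta> (l+1)) * pd (\<beta> (l+1)) = r * pd (\<beta> l)" "rval (\<beta> l) (\<beta> (l+1)) = of_nat r"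
        "pa (\<beta> l) dvd pa (\<beta> (l+1))" "pd (\<beta> (l+1)) dvd pd (\<beta> l)"
        using chain_nat[OF pat[of l] pat[of "l+1"] ch[of l]] True by auto
      have "\<not> rval (\<beta> l) (\<beta> (l+1)) \<ge> of_nat (min (pb (\<beta> l)) (pc (\<beta> (l+1))))"
        using nr[of l] ch[of l] True unfolding redundant_pair_def by auto
      hence "r < min (pb (\<beta> l)) (pc (\<beta> (l+1)))" using r(3) by (simp add: not_le del: min_less_iff_conj)
      thus ?thesis using r by auto
    qed auto
  qed
  then obtain R where R: "\<And>l. 1 \<le> l \<Longrightarrow> l < L \<Longrightarrow>
     pa (\<beta> l) * pc (\<beta> l) = R l * pa (\<beta> (l+1)) \<and> pb (\<beta> (l+1)) * pd (\<beta> (l+1)) = R l * pd (\<beta> l)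
     \<and> pa (\<beta> l) dvd pa (\<beta> (l+1)) \<and> pd (\<beta> (l+1)) dvd pd (\<beta> l)
     \<and> R l < pb (\<beta> l) \<and> R l < pc (\<beta> (l+1))"
    by metis
  have pos: "\<And>l. 1 \<le> l \<Longrightarrow> l \<le> L \<Longrightarrow> pa (\<beta> l) > 0 \<and> pb (\<beta> l) > 0 \<and> pc (\<beta> l) > 0 \<and> pd (\<beta> l) > 0"
    using pat unfolding is_pattern_def by blast
  have P: "iprod \<beta> q s = (pa (\<beta> q), pb (\<beta> q) * pd (\<beta> q) div pd (\<beta> s),
             pa (\<beta> s) * pc (\<beta> s) div pa (\<beta> q), pd (\<beta> s))
         \<and> pa (\<beta> q) dvd pa (\<beta> s) \<and> pd (\<beta> s) dvd pd (\<beta> q)"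
    by (rule iprod_form) (use assms R pat in auto)
  have Q: "iprod \<beta> (s+1) t = (pa (\<beta> (s+1)), pb (\<beta> (s+1)) * pd (\<beta> (s+1)) div pd (\<beta> t),
             pa (\<beta> t) * pc (\<beta> t) div pa (\<beta> (s+1)), pd (\<beta> t))
         \<and> pa (\<beta> (s+1)) dvd pa (\<beta> t) \<and> pd (\<beta> t) dvd pd (\<beta> (s+1))"
    by (rule iprod_form) (use assms R pat in auto)
  have mb: "pb (\<beta> k) * pd (\<beta> k) \<le> pb (\<beta> q) * pd (\<beta> q)" if "q \<le> k" "k \<le> s" for k
    using that
  proof (induction k rule: dec_induct)
    case (step n)
    have "pb (\<beta> (n+1)) * pd (\<beta> (n+1)) = R n * pd (\<beta> n)" "R n < pb (\<beta> n)" "pd (\<beta> n) > 0"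
      using R[of n] pos[of n] step assms by auto
    hence "pb (\<beta> (n+1)) * pd (\<beta> (n+1)) \<le> pb (\<beta> n) * pd (\<beta> n)" by simp
    thus ?case using step by simp
  qed simp
  have mc: "pa (\<beta> (s+1)) * pc (\<beta> (s+1)) \<le> pa (\<beta> k) * pc (\<beta> k)" if "s+1 \<le> k" "k \<le> t" for k
    using that
  proof (induction k rule: dec_induct)
    case (step n)
    have "pa (\<beta> n) * pc (\<beta> n) = R n * pa (\<beta> (n+1))" "R n < pc (\<beta> (n+1))" "pa (\<beta> (n+1)) > 0"
      using R[of n] pos[of "n+1"] step assms by auto
    hence "pa (\<beta> n) * pc (\<beta> n) \<le> pa (\<beta> (n+1)) * pc (\<beta> (n+1))" by simp
    thus ?case using step by simp
  qed simp
  have Rs: "pa (\<beta> s) * pc (\<beta> s) = R s * pa (\<beta> (s+1))" "pb (\<beta> (s+1)) * pd (\<beta> (s+1)) = R s * pd (\<beta> s)"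
     "pa (\<beta> s) dvd pa (\<beta> (s+1))" "pd (\<beta> (s+1)) dvd pd (\<beta> s)"
     "R s < pb (\<beta> s)" "R s < pc (\<beta> (s+1))"
    using R[of s] assms by auto
  have ps: "pa (\<beta> q) > 0" "pd (\<beta> s) > 0" "pa (\<beta> (s+1)) > 0" "pd (\<beta> t) > 0"
    using pos assms by auto
  define X where "X = iprod \<beta> q s"
  define Y where "Y = iprod \<beta> (s+1) t"
  have X: "pa X = pa (\<beta> q)" "pb X = pb (\<beta> q) * pd (\<beta> q) div pd (\<beta> s)"
    "pc X = pa (\<beta> s) * pc (\<beta> s) div pa (\<beta> q)" "pd X = pd (\<beta> s)"
    using P unfolding X_def by (auto simp: pa_def pb_def pc_def pd_def)
  have Y: "pa Y = pa (\<beta> (s+1))" "pb Y = pb (\<beta> (s+1)) * pd (\<beta> (s+1)) div pd (\<beta> t)"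
    "pc Y = pa (\<beta> t) * pc (\<beta> t) div pa (\<beta> (s+1))" "pd Y = pd (\<beta> t)"
    using Q unfolding Y_def by (auto simp: pa_def pb_def pc_def pd_def)
  have e1: "pa X * pc X = R s * pa Y"
  proof -
    have "pa (\<beta> q) dvd pa (\<beta> s) * pc (\<beta> s)" using P by auto
    thus ?thesis using X Y Rs(1) by simp
  qed
  have e2: "pb Y * pd Y = R s * pd X"
  proof -
    have "pd (\<beta> t) dvd pb (\<beta> (s+1)) * pd (\<beta> (s+1))" using Q by auto
    thus ?thesis using X Y Rs(2) by simp
  qed
  have d1: "pa X dvd pa Y" using X Y P Rs(3) by (auto intro: dvd_trans)
  have d2: "pd Y dvd pd X" using X Y Q Rs(4) by (auto intro: dvd_trans)
  have C: "chainable X Y \<and> rval X Y = of_nat (R s)"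
    by (rule chain_intro) (use X Y ps e1 e2 d1 d2 in auto)
  have b: "R s < pb X"
  proof -
    have "pb (\<beta> s) * pd (\<beta> s) \<le> pb (\<beta> q) * pd (\<beta> q)" using mb assms by auto
    hence "pb (\<beta> s) * pd (\<beta> s) div pd (\<beta> s) \<le> pb (\<beta> q) * pd (\<beta> q) div pd (\<beta> s)"
      by (rule div_le_mono)
    thus ?thesis using X Rs(5) ps by simp
  qed
  have c: "R s < pc Y"
  proof -
    have "pa (\<beta> (s+1)) * pc (\<beta> (s+1)) \<le> pa (\<beta> t) * pc (\<beta> t)" using mc assms by auto
    hence "pa (\<beta> (s+1)) * pc (\<beta> (s+1)) div pa (\<beta> (s+1)) \<le> pa (\<beta> t) * pc (\<beta> t) div pa (\<beta> (s+1))"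
      by (rule div_le_mono)
    thus ?thesis using Y Rs(6) ps by simp
  qed
  have "nonredundant_pair X Y" unfolding nonredundant_pair_def using C b c by simp
  thus ?thesis using C unfolding X_def Y_def by simp
qed

end
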